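(* Let $Y\in\mathbb R^{m\times n}$, $0<c<1$ and $t>0$, and put $R_c:=\frac{1}{m+n}\log(1/c)$. (a) If $\delta(\exp(a)x_Y)<c^{\frac1{m+n}}$ for some $a\in C_{R_c}(t)$, then there is $a'\in C_0(t)$ with $\delta(\exp(a')x_Y)<c^{\frac{1}{m(m+n)}}$. (b) If $\delta(\exp(a)x_Y)<c^{\frac{m+n-1}{m(m+n)}}$ for some $a\in C_0(t)$, then there is $a'\in C_{R_c}\big(t-\frac{n-1}{m+n}\log c\big)$ with $\delta(\exp(a')x_Y)<c^{\frac1{m+n}}$.
   Context: $m,n\ge1$; $\mathfrak a=\{\operatorname{diag}(a_1,\dots,a_{m+n}):\sum a_i=0\}$, $G=\operatorname{SL}_{m+n}(\mathbb R)$ acting on unimodular lattices in $\mathbb R^{m+n}$. For a constant $R\in\mathbb R$ and $t\ge0$: $C_R(t):=\{a\in\mathfrak a:a_1+\dots+a_m=-(a_{m+1}+\dots+a_{m+n})=t,\ a_i>-R\ (1\le i\le m),\ a_{m+j}<-R\ (1\le j\le n)\}$; $C_0(t)$ is the case $R=0$. For a lattice $x$, $\delta(x):=\min\{\|\boldsymbol v\|_\infty:\boldsymbol v\in x\setminus\{0\}\}$. $x_Y:=\begin{pmatrix}I_m&Y\\0&I_n\end{pmatrix}\mathbb Z^{m+n}$. *)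

theory Defs
  imports "HOL-Analysis.Analysis"
begin

text \<open>Vectors in R^(m+n) are functions nat => real, coordinates 0..m+n-1
  (paper index i corresponds to i-1); coordinates >= m+n are 0.
  A real m x n matrix Y is a function nat => nat => real, only entries i<m, j<n matter.\<close>

text \<open>The lattice x_Y = [I_m Y; 0 I_n] Z^(m+n).\<close>
definition xY :: "nat \<Rightarrow> nat \<Rightarrow> (nat \<Rightarrow> nat \<Rightarrow> real) \<Rightarrow> (nat \<Rightarrow> real) set" where
  "xY m n Y = {v. \<exists>p q :: nat \<Rightarrow> int.
      v = (\<lambda>i. if i < m then of_int (p i) + (\<Sum>j<n. Y i j * of_int (q j))
               else if i < m + n then of_int (q (i - m)) else 0)}"

definition expact :: "(nat \<Rightarrow> real) \<Rightarrow> (nat \<Rightarrow> real) set \<Rightarrow> (nat \<Rightarrow> real) set" where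
  "expact a x = (\<lambda>v. (\<lambda>i. exp (a i) * v i)) ` x"

definition supnorm :: "nat \<Rightarrow> (nat \<Rightarrow> real) \<Rightarrow> real" where
  "supnorm N v = Max ((\<lambda>i. \<bar>v i\<bar>) ` {..<N})"

text \<open>delta(x) = min of the sup norm over nonzero lattice vectors (written as Inf; it is attained).\<close>
definition delta :: "nat \<Rightarrow> (nat \<Rightarrow> real) set \<Rightarrow> real" where
  "delta N x = Inf (supnorm N ` (x - {(\<lambda>_. 0)}))"

definition Ccone :: "nat \<Rightarrow> nat \<Rightarrow> real \<Rightarrow> real \<Rightarrow> (nat \<Rightarrow> real) set" where
  "Ccone m n R t = {a. (\<forall>i\<ge>m + n. a i = 0) \<and>
      (\<Sum>i<m. a i) = t \<and> (\<Sum>j<n. a (m + j)) = - t \<and>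
      (\<forall>i<m. a i > - R) \<and> (\<forall>j<n. a (m + j) < - R)}"

end

theory Submission
  imports Defs
begin

lemma supnorm_less_iff:
  assumes "N \<ge> 1" shows "supnorm N u < B \<longleftrightarrow> (\<forall>i<N. \<bar>u i\<bar> < B)"
  proof -
  have "0 \<in> {..<N}" using assms by simp
  then have ne: "(\<lambda>i. \<bar>u i\<bar>) ` {..<N} \<noteq> {}" by blast
  show ?thesis unfolding supnorm_def using Max_less_iff[OF finite_imageI[OF finite_lessThan] ne] by auto
qed

lemma supnorm_nonneg: "N \<ge> 1 \<Longrightarrow> 0 \<le> supnorm N u"
  unfolding supnorm_def by (rule order_trans[OF abs_ge_zero[of "u 0"]]) (rule Max_ge, auto)

lemma expact_ne0: fixes a v :: "nat \<Rightarrow> real" assumes "v \<noteq> (\<lambda>_. 0)" shows "(\<lambda>i. exp (a i) * v i) \<noteq> (\<lambda>_. 0)"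
proof
  assume h: "(\<lambda>i. exp (a i) * v i) = (\<lambda>_. 0)"
  from assms obtain i where "v i \<noteq> 0" by auto
  moreover have "exp (a i) * v i = 0" using fun_cong[OF h, of i] by simp
  ultimately show False by simp
qed

lemma delta_lessE:
  assumes "delta N (expact a x) < B" "u \<in> x" "u \<noteq> (\<lambda>_. 0)"
  obtains v where "v \<in> x" "v \<noteq> (\<lambda>_. 0)" "supnorm N (\<lambda>i. exp (a i) * v i) < B"
proof -
  have "(\<lambda>i. exp (a i) * u i) \<in> expact a x - {\<lambda>_. 0}"
    using assms(2,3) expact_ne0[OF assms(3)] unfolding expact_def by auto
  then have ne: "supnorm N ` (expact a x - {\<lambda>_. 0}) \<noteq> {}" by blast
  from cInf_lessD[OF ne assms(1)[unfolded delta_def]] obtain y where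
    y: "y \<in> supnorm N ` (expact a x - {\<lambda>_. 0})" "y < B" by blast
  then obtain v where v: "v \<in> x" "(\<lambda>i. exp (a i) * v i) \<noteq> (\<lambda>_. 0)" "y = supnorm N (\<lambda>i. exp (a i) * v i)"
    unfolding expact_def by auto
  have "v \<noteq> (\<lambda>_. 0)" using v(2) by auto
  then show ?thesis using that v y by auto
qed

lemma delta_lessI:
  assumes "N \<ge> 1" "w \<in> x" "w \<noteq> (\<lambda>_. 0)" "supnorm N (\<lambda>i. exp (a i) * w i) < B"
  shows "delta N (expact a x) < B"
proof -
  have mem: "(\<lambda>i. exp (a i) * w i) \<in> expact a x - {\<lambda>_. 0}"
    using assms(2,3) expact_ne0[OF assms(3)] unfolding expact_def by auto
  have bdd: "bdd_below (supnorm N ` (expact a x - {\<lambda>_. 0}))"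
    using supnorm_nonneg[OF assms(1)] by (auto intro!: bdd_belowI[where m=0])
  have "delta N (expact a x) \<le> supnorm N (\<lambda>i. exp (a i) * w i)"
    unfolding delta_def using mem bdd by (auto intro!: cInf_lower)
  then show ?thesis using assms(4) by linarith
qed


lemma count1:
  fixes \<beta> s :: real and M :: nat
  assumes "0 < s" "s \<le> 1" "M \<ge> 1"
  shows "nat \<lfloor>real M * s\<rfloor> \<le> card {g \<in> {..<M}. \<exists>n::int. 0 \<le> real g / M - \<beta> - n \<and> real g / M - \<beta> - n < s}"
proof -
  define L where "L = nat \<lfloor>real M * s\<rfloor>"
  have "real M * s \<le> real M" using assms by (simp add: mult_left_le)
  then have "\<lfloor>real M * s\<rfloor> \<le> int M" by (metis floor_mono floor_of_nat)
  then have LM: "L \<le> M" unfolding L_def by simp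
  define j0 where "j0 = \<lceil>real M * \<beta>\<rceil>"
  define f where "f j = nat ((j0 + int j) mod int M)" for j :: nat
  have Mpos: "(0::int) < int M" using assms by simp
  have inj: "inj_on f {..<L}"
  proof
    fix x y assume xy: "x \<in> {..<L}" "y \<in> {..<L}" "f x = f y"
    then have "(j0 + int x) mod int M = (j0 + int y) mod int M"
      unfolding f_def using Mpos by (simp add: eq_nat_nat_iff pos_mod_sign)
    then have "int M dvd (int x - int y)"
      by (metis add_diff_cancel_left mod_eq_dvd_iff)
    then obtain d where d: "int x - int y = int M * d" by (auto elim: dvdE)
    have lt: "\<bar>int x - int y\<bar> < int M" using xy LM by auto
    have "d = 0"
    proof (rule ccontr)
      assume "d \<noteq> 0"
      then have "1 \<le> \<bar>d\<bar>" by simp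
      then have "int M * 1 \<le> int M * \<bar>d\<bar>" by (rule mult_left_mono) simp
      then show False using lt d by (simp add: abs_mult)
    qed
    then show "x = y" using d by simp
  qed
  have sub: "f ` {..<L} \<subseteq> {g \<in> {..<M}. \<exists>n::int. 0 \<le> real g / M - \<beta> - n \<and> real g / M - \<beta> - n < s}"
  proof
    fix g assume "g \<in> f ` {..<L}"
    then obtain j where j: "j < L" "g = f j" by auto
    define z where "z = j0 + int j"
    have gz: "int g = z mod int M" unfolding j f_def z_def using Mpos by simp
    have zdec: "z = int M * (z div int M) + z mod int M" by simp
    have "z mod int M < int M" using Mpos by simp
    then have gM: "g < M" using gz by simp
    have Mr: "real M > 0" using assms by simp
    have eq: "real g / M - \<beta> - real_of_int (- (z div int M)) = real_of_int z / M - \<beta>"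
    proof -
      have "real_of_int z = real M * real_of_int (z div int M) + real g"
        using arg_cong[OF zdec, of real_of_int] gz by (metis of_int_add of_int_mult of_int_of_nat_eq)
      then show ?thesis using Mr by (simp add: field_simps)
    qed
    have lo: "0 \<le> real_of_int z / M - \<beta>"
    proof -
      have "real M * \<beta> \<le> real_of_int j0" unfolding j0_def by simp
      then have "real M * \<beta> \<le> real_of_int z" unfolding z_def by simp
      then show ?thesis using Mr by (simp add: field_simps)
    qed
    have hi: "real_of_int z / M - \<beta> < s"
    proof -
      have "real_of_int j0 < real M * \<beta> + 1" unfolding j0_def by linarith
      moreover have "real j + 1 \<le> real L" using j by simp
      moreover have "real L \<le> real M * s" unfolding L_def using assms by simp
      ultimately have "real_of_int z < real M * \<beta> + real M * s" unfolding z_def by simp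
      then show ?thesis using Mr by (simp add: field_simps)
    qed
    show "g \<in> {g \<in> {..<M}. \<exists>n::int. 0 \<le> real g / M - \<beta> - n \<and> real g / M - \<beta> - n < s}"
      using gM eq lo hi by (intro CollectI conjI) (auto intro!: exI[of _ "- (z div int M)"])
  qed
  have "L = card (f ` {..<L})" using inj by (simp add: card_image)
  also have "\<dots> \<le> card {g \<in> {..<M}. \<exists>n::int. 0 \<le> real g / M - \<beta> - n \<and> real g / M - \<beta> - n < s}"
    by (rule card_mono[OF _ sub]) simp
  finally show ?thesis unfolding L_def .
qed


lemma dirichlet_box:
  fixes I :: "nat set" and \<alpha> s :: "nat \<Rightarrow> real" and K :: nat
  assumes fin: "finite I" and s: "\<forall>i\<in>I. 0 < s i \<and> s i \<le> 1"
    and big: "(real K + 1) * (\<Prod>i\<in>I. s i) > 1"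
  shows "\<exists>k::nat. 1 \<le> k \<and> k \<le> K \<and> (\<exists>p::nat\<Rightarrow>int. \<forall>i\<in>I. \<bar>real k * \<alpha> i - p i\<bar> < s i)"
proof -
  have l0: "(\<lambda>M::nat. 1 / real M) \<longlonglongrightarrow> 0" by (rule lim_const_over_n)
  have lim: "(\<lambda>M::nat. (real K + 1) * (\<Prod>i\<in>I. (s i - 1 / real M))) \<longlonglongrightarrow> (real K + 1) * (\<Prod>i\<in>I. (s i - 0))"
    by (intro tendsto_intros l0)
  have ev1: "eventually (\<lambda>M. 1 < (real K + 1) * (\<Prod>i\<in>I. (s i - 1 / real M))) sequentially"
    using order_tendstoD(1)[OF lim] big by simp
  have ev2: "eventually (\<lambda>M. \<forall>i\<in>I. 1 / real M < s i) sequentially"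
    using fin s by (intro eventually_ball_finite) (auto intro: order_tendstoD(2)[OF l0])
  have ev3: "eventually (\<lambda>M::nat. 1 \<le> M) sequentially" by (rule eventually_ge_at_top)
  from eventually_conj[OF ev1 eventually_conj[OF ev2 ev3]] obtain M where
    M: "1 < (real K + 1) * (\<Prod>i\<in>I. (s i - 1 / real M))" "\<forall>i\<in>I. 1 / real M < s i" "1 \<le> M"
    unfolding eventually_sequentially by blast
  have Mr: "real M > 0" using M by simp
  define A where "A k i = {g \<in> {..<M}. \<exists>n::int. 0 \<le> real g / M - real k * \<alpha> i - n \<and> real g / M - real k * \<alpha> i - n < s i}" for k :: nat and i
  define T where "T k = PiE I (A k)" for k
  define G where "G = PiE I (\<lambda>_. {..<M})"
  have cardG: "card G = M ^ card I" by (simp add: G_def card_PiE fin)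
  have finG: "finite G" unfolding G_def using fin by (simp add: finite_PiE)
  have TG: "T k \<subseteq> G" for k unfolding T_def G_def A_def by (rule PiE_mono) auto
  have finT: "finite (T k)" for k using TG finG finite_subset by blast
  have cardT: "real M ^ card I * (\<Prod>i\<in>I. (s i - 1 / real M)) \<le> real (card (T k))" for k
  proof -
    have "real M ^ card I * (\<Prod>i\<in>I. (s i - 1 / real M)) = (\<Prod>i\<in>I. real M * (s i - 1 / real M))"
      by (simp add: prod.distrib)
    also have "\<dots> = (\<Prod>i\<in>I. real M * s i - 1)"
      using Mr by (intro prod.cong) (auto simp: field_simps)
    also have "\<dots> \<le> (\<Prod>i\<in>I. real (card (A k i)))"
    proof (rule prod_mono, intro conjI)
      fix i assume i: "i \<in> I"
      have "1 / real M < s i" using M(2) i by auto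
      then have sM: "1 < real M * s i" using Mr by (simp add: field_simps)
      then show "0 \<le> real M * s i - 1" by simp
      have c1: "nat \<lfloor>real M * s i\<rfloor> \<le> card (A k i)"
        unfolding A_def using count1[of "s i" M "real k * \<alpha> i"] s i M(3) by auto
      have "real M * s i - 1 \<le> real_of_int \<lfloor>real M * s i\<rfloor>" by linarith
      also have "\<dots> = real (nat \<lfloor>real M * s i\<rfloor>)" using sM by simp
      also have "\<dots> \<le> real (card (A k i))" using c1 by simp
      finally show "real M * s i - 1 \<le> real (card (A k i))" .
    qed
    also have "\<dots> = real (card (T k))" by (simp add: T_def card_PiE fin)
    finally show ?thesis .
  qed
  have "\<exists>k k'. k < k' \<and> k' \<le> K \<and> T k \<inter> T k' \<noteq> {}"
  proof (rule ccontr)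
    assume "\<not> ?thesis"
    then have disj: "\<forall>k\<in>{..K}. \<forall>k'\<in>{..K}. k \<noteq> k' \<longrightarrow> T k \<inter> T k' = {}"
      by (metis inf_commute linorder_neqE_nat atMost_iff)
    have eqc: "card (\<Union>k\<in>{..K}. T k) = (\<Sum>k\<in>{..K}. card (T k))"
      using disj finT by (intro card_UN_disjoint) auto
    have "card (\<Union>k\<in>{..K}. T k) \<le> card G" using finG TG by (intro card_mono) auto
    then have "(\<Sum>k\<in>{..K}. card (T k)) \<le> card G" using eqc by simp
    then have le0: "(\<Sum>k\<in>{..K}. card (T k)) \<le> M ^ card I" using cardG by simp
    have le: "(\<Sum>k\<in>{..K}. real (card (T k))) \<le> real M ^ card I"
      using le0 by (metis of_nat_le_iff of_nat_sum of_nat_power)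
    have "(\<Sum>k\<in>{..K}. real M ^ card I * (\<Prod>i\<in>I. (s i - 1 / real M))) \<le> (\<Sum>k\<in>{..K}. real (card (T k)))"
      by (rule sum_mono) (rule cardT)
    then have "(real K + 1) * (real M ^ card I * (\<Prod>i\<in>I. (s i - 1 / real M))) \<le> real M ^ card I"
      using le by (simp add: add.commute)
    moreover have "real M ^ card I < (real K + 1) * (real M ^ card I * (\<Prod>i\<in>I. (s i - 1 / real M)))"
    proof -
      have "real M ^ card I * 1 < real M ^ card I * ((real K + 1) * (\<Prod>i\<in>I. (s i - 1 / real M)))"
        using M(1) Mr by (intro mult_strict_left_mono) auto
      then show ?thesis by (simp add: algebra_simps)
    qed
    ultimately show False by simp
  qed
  then obtain k k' where kk: "k < k'" "k' \<le> K" "T k \<inter> T k' \<noteq> {}" by blast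
  then obtain g where g: "g \<in> T k" "g \<in> T k'" by blast
  have "\<forall>i\<in>I. \<exists>p::int. \<bar>real (k' - k) * \<alpha> i - p\<bar> < s i"
  proof
    fix i assume i: "i \<in> I"
    have "g i \<in> A k i" "g i \<in> A k' i" using g i unfolding T_def by auto
    then obtain n n' :: int where
      n: "0 \<le> real (g i) / M - real k * \<alpha> i - n" "real (g i) / M - real k * \<alpha> i - n < s i" and
      n': "0 \<le> real (g i) / M - real k' * \<alpha> i - n'" "real (g i) / M - real k' * \<alpha> i - n' < s i"
      unfolding A_def by blast
    have "real (k' - k) = real k' - real k" using kk by simp
    then have "\<bar>real (k' - k) * \<alpha> i - real_of_int (n - n')\<bar> < s i" using n n'
      by (simp add: algebra_simps abs_less_iff)
    then show "\<exists>p::int. \<bar>real (k' - k) * \<alpha> i - p\<bar> < s i" by blast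
  qed
  then obtain p :: "nat \<Rightarrow> int" where "\<forall>i\<in>I. \<bar>real (k' - k) * \<alpha> i - p i\<bar> < s i"
    by metis
  moreover have "1 \<le> k' - k" "k' - k \<le> K" using kk by auto
  ultimately show ?thesis by blast
qed


definition vecY :: "nat \<Rightarrow> nat \<Rightarrow> (nat \<Rightarrow> nat \<Rightarrow> real) \<Rightarrow> (nat \<Rightarrow> int) \<Rightarrow> (nat \<Rightarrow> int) \<Rightarrow> nat \<Rightarrow> real" where
  "vecY m n Y p q = (\<lambda>i. if i < m then of_int (p i) + (\<Sum>j<n. Y i j * of_int (q j))
               else if i < m + n then of_int (q (i - m)) else 0)"

lemma xY_vecY: "xY m n Y = {v. \<exists>p q. v = vecY m n Y p q}"
  unfolding xY_def vecY_def by simp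

lemma vecY_mem: "vecY m n Y p q \<in> xY m n Y"
  unfolding xY_vecY by blast

lemma vecY_low: "i < m \<Longrightarrow> vecY m n Y p q i = of_int (p i) + (\<Sum>j<n. Y i j * of_int (q j))"
  unfolding vecY_def by simp

lemma vecY_up: "j < n \<Longrightarrow> vecY m n Y p q (m + j) = of_int (q j)"
  unfolding vecY_def by simp

lemma unit_mem: assumes "m \<ge> 1"
  shows "vecY m n Y (\<lambda>i. if i = 0 then 1 else 0) (\<lambda>_. 0) \<in> xY m n Y"
    and "vecY m n Y (\<lambda>i. if i = 0 then 1 else 0) (\<lambda>_. 0) \<noteq> (\<lambda>_. 0)"
proof -
  show "vecY m n Y (\<lambda>i. if i = 0 then 1 else 0) (\<lambda>_. 0) \<in> xY m n Y" by (rule vecY_mem)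
  have "vecY m n Y (\<lambda>i. if i = 0 then 1 else 0) (\<lambda>_. 0) 0 = 1"
    using assms by (simp add: vecY_low)
  then show "vecY m n Y (\<lambda>i. if i = 0 then 1 else 0) (\<lambda>_. 0) \<noteq> (\<lambda>_. 0)" by auto
qed

lemma exists_q:
  assumes "vecY m n Y p q \<noteq> (\<lambda>_. 0)" "\<forall>i<m. \<bar>vecY m n Y p q i\<bar> < 1"
  shows "\<exists>j<n. q j \<noteq> 0"
proof (rule ccontr)
  assume "\<not> ?thesis"
  then have q0: "\<forall>j<n. q j = 0" by auto
  have "vecY m n Y p q i = 0" for i
  proof -
    consider "i < m" | "m \<le> i" "i < m + n" | "m + n \<le> i" by linarith
    then show ?thesis
    proof cases
      case 1
      then have "vecY m n Y p q i = of_int (p i)" using q0 by (simp add: vecY_low)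
      moreover have "\<bar>vecY m n Y p q i\<bar> < 1" using assms(2) 1 by auto
      ultimately have "real_of_int \<bar>p i\<bar> < 1" by simp
      then have "\<bar>p i\<bar> < 1" by simp
      then have "p i = 0" by linarith
      then show ?thesis using \<open>vecY m n Y p q i = of_int (p i)\<close> by simp
    next
      case 2
      then show ?thesis using q0 by (simp add: vecY_def)
    next
      case 3
      then show ?thesis by (simp add: vecY_def)
    qed
  qed
  then show False using assms(1) by auto
qed

lemma sum_le_member_neg:
  fixes f :: "nat \<Rightarrow> real"
  assumes "\<forall>j<n. f j < 0" "j0 < n"
  shows "- f j0 \<le> - (\<Sum>j<n. f j)"
proof -
  have "(\<lambda>j. - f j) j0 \<le> (\<Sum>j<n. - f j)"
    by (rule member_le_sum) (use assms in auto)
  then show ?thesis by (simp add: sum_negf)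
qed


lemma partB:
  fixes m n :: nat and Y :: "nat \<Rightarrow> nat \<Rightarrow> real" and R t :: real and a :: "nat \<Rightarrow> real"
  assumes m1: "m \<ge> 1" and n1: "n \<ge> 1" and Rpos: "R > 0" and tpos: "t > 0"
    and aC: "a \<in> Ccone m n 0 t"
    and dl: "delta (m + n) (expact a (xY m n Y)) < exp (- ((real (m + n) - 1) * R / real m))"
  shows "\<exists>a'\<in>Ccone m n R (t + (real n - 1) * R). delta (m + n) (expact a' (xY m n Y)) < exp (- R)"
proof -
  define B where "B = exp (- ((real (m + n) - 1) * R / real m))"
  have mr: "real m > 0" using m1 by simp
  have BR: "B \<le> exp (- R)"
  proof -
    have "R \<le> (real (m + n) - 1) * R / real m" using mr Rpos n1 by (simp add: field_simps)
    then show ?thesis unfolding B_def by simp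
  qed
  have a0: "\<forall>i\<ge>m + n. a i = 0" and asum1: "(\<Sum>i<m. a i) = t" and asum2: "(\<Sum>j<n. a (m + j)) = - t"
    and apos: "\<forall>i<m. a i > 0" and aneg: "\<forall>j<n. a (m + j) < 0"
    using aC unfolding Ccone_def by auto
  obtain v where v: "v \<in> xY m n Y" "v \<noteq> (\<lambda>_. 0)" "supnorm (m + n) (\<lambda>i. exp (a i) * v i) < B"
    using delta_lessE[OF dl[folded B_def] unit_mem[OF m1]] by blast
  obtain p q where vpq: "v = vecY m n Y p q" using v(1) unfolding xY_vecY by blast
  have H: "\<forall>i<m + n. exp (a i) * \<bar>v i\<bar> < B"
    using v(3) supnorm_less_iff[of "m + n"] m1 by (simp add: abs_mult)
  have v1: "\<forall>i<m. \<bar>v i\<bar> < 1"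
  proof (intro allI impI)
    fix i assume i: "i < m"
    have "0 \<le> a i" using apos i by (simp add: less_imp_le)
    then have "1 \<le> exp (a i)" by simp
    then have "\<bar>v i\<bar> \<le> exp (a i) * \<bar>v i\<bar>" by (simp add: mult_le_cancel_right1)
    also have "\<dots> < B" using H i by simp
    also have "\<dots> \<le> 1" using BR Rpos by (meson exp_le_one_iff neg_le_0_iff_le less_imp_le order_trans)
    finally show "\<bar>v i\<bar> < 1" .
  qed
  obtain j0 where j0: "j0 < n" "q j0 \<noteq> 0" using exists_q[of m n Y p q] v(2) v1 vpq by auto
  have "1 \<le> \<bar>v (m + j0)\<bar>" using j0 vpq by (simp add: vecY_up)
  then have "exp (a (m + j0)) \<le> exp (a (m + j0)) * \<bar>v (m + j0)\<bar>" by (simp add: mult_le_cancel_left1)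
  also have "\<dots> < B" using H j0 by simp
  finally have "a (m + j0) < - ((real (m + n) - 1) * R / real m)" unfolding B_def by simp
  moreover have "R \<le> (real (m + n) - 1) * R / real m" using mr Rpos n1 by (simp add: field_simps)
  ultimately have aj0: "a (m + j0) < - R" by linarith
  have tR: "t > R" using sum_le_member_neg[OF aneg j0(1)] asum2 aj0 by linarith
  have abnd: "\<forall>j<n. - a (m + j) \<le> t" using sum_le_member_neg[OF aneg] asum2 by auto
  define \<theta> where "\<theta> = (t - R) / t"
  have thpos: "\<theta> > 0" unfolding \<theta>_def using tR tpos by simp
  have tht: "\<theta> * t = t - R" unfolding \<theta>_def using tpos by simp
  define a' where "a' i = (if i < m then a i + (real n - 1) * R / real m
                   else if i < m + n then - R + \<theta> * a i else 0)" for i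
  have a'C: "a' \<in> Ccone m n R (t + (real n - 1) * R)"
    unfolding Ccone_def
  proof (intro CollectI conjI allI impI)
    show "a' i = 0" if "m + n \<le> i" for i using that unfolding a'_def by simp
    have "(\<Sum>i<m. a' i) = (\<Sum>i<m. a i + (real n - 1) * R / real m)"
      unfolding a'_def by simp
    also have "\<dots> = t + (real n - 1) * R" using asum1 mr by (simp add: sum.distrib)
    finally show "(\<Sum>i<m. a' i) = t + (real n - 1) * R" .
    have "(\<Sum>j<n. a' (m + j)) = (\<Sum>j<n. - R + \<theta> * a (m + j))"
      unfolding a'_def by simp
    also have "\<dots> = \<theta> * (\<Sum>j<n. a (m + j)) - real n * R"
      by (simp add: sum_subtractf sum_distrib_left)
    also have "\<dots> = - (real n * R) + \<theta> * (- t)" using asum2 by simp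
    also have "\<dots> = - (t + (real n - 1) * R)" using tht by (simp add: algebra_simps)
    finally show "(\<Sum>j<n. a' (m + j)) = - (t + (real n - 1) * R)" .
    show "- R < a' i" if "i < m" for i
    proof -
      have "0 \<le> (real n - 1) * R / real m" using n1 Rpos mr by simp
      then show ?thesis using that apos Rpos unfolding a'_def by auto
    qed
    show "a' (m + j) < - R" if "j < n" for j
    proof -
      have "\<theta> * a (m + j) < 0" using thpos aneg that by (simp add: mult_pos_neg)
      then show ?thesis using that unfolding a'_def by simp
    qed
  qed
  have bound: "\<forall>i<m + n. \<bar>exp (a' i) * v i\<bar> < exp (- R)"
  proof (intro allI impI)
    fix i assume i: "i < m + n"
    show "\<bar>exp (a' i) * v i\<bar> < exp (- R)"
    proof (cases "i < m")
      case True
      have "\<bar>exp (a' i) * v i\<bar> = exp ((real n - 1) * R / real m) * (exp (a i) * \<bar>v i\<bar>)"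
        using True unfolding a'_def by (simp add: abs_mult exp_add)
      also have "\<dots> < exp ((real n - 1) * R / real m) * B"
        using H True by (intro mult_strict_left_mono) auto
      also have "\<dots> = exp (- R)" unfolding B_def mult_exp_exp
        using mr by (simp add: field_simps)
      finally show ?thesis .
    next
      case False
      then obtain j where j: "i = m + j" "j < n" using i by (metis add_diff_inverse_nat add_less_cancel_left)
      have "\<theta> * a i = a i + R * (- a i / t)" unfolding \<theta>_def using tpos by (simp add: field_simps)
      moreover have "- a i / t \<le> 1"
      proof -
        have "- a i \<le> t" using abnd j by auto
        then show ?thesis using tpos by (simp add: field_simps)
      qed
      ultimately have "\<theta> * a i \<le> a i + R" using Rpos
        by (metis add_left_mono mult.right_neutral mult_left_mono less_imp_le)
      then have "a' i \<le> a i" unfolding a'_def using False i by simp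
      then have "\<bar>exp (a' i) * v i\<bar> \<le> exp (a i) * \<bar>v i\<bar>" by (simp add: abs_mult mult_right_mono)
      also have "\<dots> < B" using H i by simp
      finally show ?thesis using BR by simp
    qed
  qed
  have "delta (m + n) (expact a' (xY m n Y)) < exp (- R)"
    using delta_lessI[of "m + n" v "xY m n Y" a' "exp (- R)"] v(1,2) m1 bound
      supnorm_less_iff[of "m + n" "\<lambda>i. exp (a' i) * v i" "exp (- R)"] by simp
  then show ?thesis using a'C by blast
qed


lemma partA:
  fixes m n :: nat and Y :: "nat \<Rightarrow> nat \<Rightarrow> real" and R t :: real and a :: "nat \<Rightarrow> real"
  assumes m1: "m \<ge> 1" and n1: "n \<ge> 1" and Rpos: "R > 0" and tpos: "t > 0"
    and aC: "a \<in> Ccone m n R t"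
    and dl: "delta (m + n) (expact a (xY m n Y)) < exp (- R)"
  shows "\<exists>a'\<in>Ccone m n 0 t. delta (m + n) (expact a' (xY m n Y)) < exp (- R / real m)"
proof -
  have mr: "real m > 0" using m1 by simp
  have RRm: "exp (- R) \<le> exp (- R / real m)" using m1 Rpos by (simp add: field_simps)
  have a0: "\<forall>i\<ge>m + n. a i = 0" and asum1: "(\<Sum>i<m. a i) = t" and asum2: "(\<Sum>j<n. a (m + j)) = - t"
    and alow: "\<forall>i<m. a i > - R" and aneg: "\<forall>j<n. a (m + j) < - R"
    using aC unfolding Ccone_def by auto
  obtain v where v: "v \<in> xY m n Y" "v \<noteq> (\<lambda>_. 0)" "supnorm (m + n) (\<lambda>i. exp (a i) * v i) < exp (- R)"
    using delta_lessE[OF dl unit_mem[OF m1]] by blast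
  obtain p q where vpq: "v = vecY m n Y p q" using v(1) unfolding xY_vecY by blast
  have H: "\<forall>i<m + n. exp (a i) * \<bar>v i\<bar> < exp (- R)"
    using v(3) supnorm_less_iff[of "m + n"] m1 by (simp add: abs_mult)
  have v1: "\<forall>i<m. \<bar>v i\<bar> < 1"
  proof (intro allI impI; rule ccontr)
    fix i assume i: "i < m" and "\<not> \<bar>v i\<bar> < 1"
    then have "1 \<le> \<bar>v i\<bar>" by simp
    then have "exp (a i) \<le> exp (a i) * \<bar>v i\<bar>" by (simp add: mult_le_cancel_left1)
    also have "\<dots> < exp (- R)" using H i by simp
    finally have "a i < - R" by simp
    moreover have "- R < a i" using alow i by blast
    ultimately show False by linarith
  qed
  obtain j0 where j0: "j0 < n" "q j0 \<noteq> 0" using exists_q[of m n Y p q] v(2) v1 vpq by auto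
  define I where "I = {i. i < m \<and> a i \<le> 0}"
  define J where "J = {i. i < m \<and> 0 < a i}"
  have finI: "finite I" and finJ: "finite J" unfolding I_def J_def by auto
  have IJ: "{..<m} = I \<union> J" "I \<inter> J = {}" unfolding I_def J_def by auto
  show ?thesis
  proof (cases "I = {}")
    case True
    have "a \<in> Ccone m n 0 t" unfolding Ccone_def
    proof (intro CollectI conjI allI impI)
      show "a i = 0" if "m + n \<le> i" for i using a0 that by auto
      show "(\<Sum>i<m. a i) = t" by (rule asum1)
      show "(\<Sum>j<n. a (m + j)) = - t" by (rule asum2)
      show "- 0 < a i" if "i < m" for i using True that unfolding I_def by auto
      show "a (m + j) < - 0" if "j < n" for j
      proof -
        have "a (m + j) < - R" using aneg that by blast
        then show ?thesis using Rpos by linarith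
      qed
    qed
    moreover have "delta (m + n) (expact a (xY m n Y)) < exp (- R / real m)"
      using dl RRm by linarith
    ultimately show ?thesis by blast
  next
    case False
    define d where "d = card I"
    have d1: "d \<ge> 1" using False finI unfolding d_def by (simp add: Suc_le_eq card_gt_0_iff)
    have "J \<noteq> {}"
    proof
      assume "J = {}"
      then have "(\<Sum>i<m. a i) = (\<Sum>i\<in>I. a i)" using IJ by simp
      also have "\<dots> \<le> 0" unfolding I_def by (rule sum_nonpos) auto
      finally show False using asum1 tpos by simp
    qed
    then have "I \<subset> {..<m}" using IJ by auto
    then have "d < m" unfolding d_def using psubset_card_mono[of "{..<m}" I] by simp
    then have dm: "real d \<le> real m - 1" by linarith
    define K where "K = nat \<lfloor>exp (R * (real m - 1) / real m)\<rfloor>"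
    have eK1: "1 \<le> exp (R * (real m - 1) / real m)" using Rpos m1 by simp
    have Kle: "real K \<le> exp (R * (real m - 1) / real m)" unfolding K_def using eK1 by simp
    have Kgt: "exp (R * (real m - 1) / real m) < real K + 1" unfolding K_def using eK1 by linarith
    have K1: "K \<ge> 1" unfolding K_def using eK1 by (simp add: le_nat_floor)
    have KR: "real K * exp (- R) \<le> exp (- R / real m)"
    proof -
      have "real K * exp (- R) \<le> exp (R * (real m - 1) / real m) * exp (- R)"
        using Kle by simp
      also have "\<dots> = exp (- R / real m)" unfolding mult_exp_exp using mr by (simp add: field_simps)
      finally show ?thesis .
    qed
    define \<eta> where "\<eta> = ln (real K + 1) - R * (real m - 1) / real m"
    have "exp (R * (real m - 1) / real m) < exp (ln (real K + 1))" using Kgt by simp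
    then have "R * (real m - 1) / real m < ln (real K + 1)" by (simp only: exp_less_cancel_iff)
    then have etapos: "\<eta> > 0" unfolding \<eta>_def by linarith
    define \<epsilon> where "\<epsilon> = min \<eta> t / 2"
    have eps: "0 < \<epsilon>" "\<epsilon> < \<eta>" "\<epsilon> < t" unfolding \<epsilon>_def using etapos tpos by auto
    define s where "s i = exp (- R / real m - \<epsilon> / real d)" for i :: nat
    have dr: "real d > 0" using d1 by simp
    have s01: "\<forall>i\<in>I. 0 < s i \<and> s i \<le> 1"
    proof -
      have "0 \<le> R / real m" "0 \<le> \<epsilon> / real d" using Rpos mr dr eps by auto
      then have "- R / real m - \<epsilon> / real d \<le> 0" by linarith
      then show ?thesis unfolding s_def by simp
    qed
    have sbig: "(real K + 1) * (\<Prod>i\<in>I. s i) > 1"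
    proof -
      have "(\<Prod>i\<in>I. s i) = exp (real d * (- R / real m - \<epsilon> / real d))"
        unfolding s_def d_def by (simp add: exp_of_nat_mult)
      also have "\<dots> = exp (- (real d * R / real m) - \<epsilon>)" using dr by (simp add: field_simps)
      finally have pr: "(\<Prod>i\<in>I. s i) = exp (- (real d * R / real m) - \<epsilon>)" .
      have "real d * R / real m \<le> R * (real m - 1) / real m"
        using dm Rpos mr by (simp add: divide_right_mono mult.commute mult_right_mono)
      then have pos: "ln (real K + 1) - real d * R / real m - \<epsilon> > 0" using eps unfolding \<eta>_def by linarith
      have "(real K + 1) * (\<Prod>i\<in>I. s i) = exp (ln (real K + 1) - real d * R / real m - \<epsilon>)"
        unfolding pr by (simp add: exp_diff exp_minus exp_add field_simps)
      then show ?thesis using pos by simp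
    qed
    obtain k p' where k: "1 \<le> k" "k \<le> K" and kp: "\<forall>i\<in>I. \<bar>real k * v i - of_int (p' i)\<bar> < s i"
      using dirichlet_box[OF finI s01 sbig, of v] by blast
    define SJ where "SJ = (\<Sum>i\<in>J. a i)"
    have "t = (\<Sum>i\<in>I. a i) + SJ" unfolding SJ_def using asum1 IJ finI finJ
      by (simp add: sum.union_disjoint)
    moreover have "(\<Sum>i\<in>I. a i) \<le> 0" unfolding I_def by (rule sum_nonpos) auto
    ultimately have SJt: "t \<le> SJ" by linarith
    define a' where "a' i = (if i \<in> I then \<epsilon> / real d else if i \<in> J then a i * ((t - \<epsilon>) / SJ) else a i)" for i
    have a'C: "a' \<in> Ccone m n 0 t" unfolding Ccone_def
    proof (intro CollectI conjI allI impI)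
      show "a' i = 0" if "m + n \<le> i" for i using a0 that unfolding a'_def I_def J_def by auto
      have "(\<Sum>i<m. a' i) = (\<Sum>i\<in>I. a' i) + (\<Sum>i\<in>J. a' i)"
        using IJ finI finJ by (simp add: sum.union_disjoint)
      also have "(\<Sum>i\<in>I. a' i) = \<epsilon>" unfolding a'_def using dr by (simp add: d_def)
      also have "(\<Sum>i\<in>J. a' i) = (\<Sum>i\<in>J. a i * ((t - \<epsilon>) / SJ))"
        unfolding a'_def using IJ by (intro sum.cong) auto
      also have "\<dots> = t - \<epsilon>" unfolding sum_distrib_right[symmetric] SJ_def[symmetric]
        using SJt tpos by simp
      finally show "(\<Sum>i<m. a' i) = t" by simp
      have "(\<Sum>j<n. a' (m + j)) = (\<Sum>j<n. a (m + j))"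
        unfolding a'_def I_def J_def by simp
      then show "(\<Sum>j<n. a' (m + j)) = - t" using asum2 by simp
      show "- 0 < a' i" if "i < m" for i
      proof -
        have "i \<in> I \<or> i \<in> J" using that IJ by auto
        moreover have "(t - \<epsilon>) / SJ > 0" using eps SJt by simp
        ultimately show ?thesis
        proof (elim disjE)
          assume "i \<in> I" then show ?thesis unfolding a'_def using eps dr by simp
        next
          assume iJ: "i \<in> J" "(t - \<epsilon>) / SJ > 0"
          then have "i \<notin> I" "0 < a i" using IJ unfolding J_def by auto
          then have pp: "0 < a i * ((t - \<epsilon>) / SJ)" using iJ(2) by (intro mult_pos_pos) auto
          have "a' i = a i * ((t - \<epsilon>) / SJ)" unfolding a'_def using \<open>i \<notin> I\<close> iJ(1) by simp
          then show ?thesis using pp by linarith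
        qed
      qed
      show "a' (m + j) < - 0" if "j < n" for j
      proof -
        have "a (m + j) < - R" using aneg that by blast
        moreover have "a' (m + j) = a (m + j)" unfolding a'_def I_def J_def by simp
        ultimately show ?thesis using Rpos by linarith
      qed
    qed
    define P where "P i = (if i \<in> I then p' i else 0)" for i
    define w where "w = vecY m n Y (\<lambda>i. int k * p i - P i) (\<lambda>j. int k * q j)"
    have wlow: "w i = real k * v i - of_int (P i)" if "i < m" for i
    proof -
      have sk: "(\<Sum>j<n. Y i j * (real k * of_int (q j))) = real k * (\<Sum>j<n. Y i j * of_int (q j))"
        unfolding sum_distrib_left by (intro sum.cong) (simp_all add: mult.left_commute)
      show ?thesis using that unfolding w_def vpq by (simp add: vecY_low sk ring_distribs)
    qed
    have wup: "w (m + j) = real k * v (m + j)" if "j < n" for j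
      using that unfolding w_def vpq by (simp add: vecY_up)
    have wne: "w \<noteq> (\<lambda>_. 0)"
    proof
      assume "w = (\<lambda>_. 0)"
      then have "w (m + j0) = 0" by simp
      moreover have "w (m + j0) = real k * of_int (q j0)" using wup j0 vpq by (simp add: vecY_up)
      ultimately show False using k j0 by simp
    qed
    have Kpos: "real K > 0" using K1 by simp
    have bound: "\<forall>i<m + n. \<bar>exp (a' i) * w i\<bar> < exp (- R / real m)"
    proof (intro allI impI)
      fix i assume i: "i < m + n"
      consider "i \<in> I" | "i \<in> J" | "m \<le> i" by (cases "i < m"; cases "a i \<le> 0") (auto simp: I_def J_def)
      then show "\<bar>exp (a' i) * w i\<bar> < exp (- R / real m)"
      proof cases
        case 1
        then have im: "i < m" unfolding I_def by simp
        have "\<bar>exp (a' i) * w i\<bar> = exp (\<epsilon> / real d) * \<bar>real k * v i - of_int (p' i)\<bar>"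
          using 1 wlow[OF im] unfolding a'_def P_def by (simp add: abs_mult)
        also have "\<dots> < exp (\<epsilon> / real d) * s i"
          using kp 1 by (intro mult_strict_left_mono) auto
        also have "\<dots> = exp (- R / real m)" unfolding s_def mult_exp_exp by simp
        finally show ?thesis .
      next
        case 2
        then have im: "i < m" and ai: "0 < a i" and niI: "i \<notin> I" using IJ unfolding J_def by auto
        have "(t - \<epsilon>) / SJ \<le> 1" using SJt eps by simp
        then have "a i * ((t - \<epsilon>) / SJ) \<le> a i * 1" using ai by (intro mult_left_mono) auto
        then have "a i * ((t - \<epsilon>) / SJ) \<le> a i" by simp
        then have ale: "a' i \<le> a i" unfolding a'_def using 2 niI by simp
        have "\<bar>exp (a' i) * w i\<bar> = exp (a' i) * (real k * \<bar>v i\<bar>)"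
          using wlow[OF im] niI unfolding P_def by (simp add: abs_mult)
        also have "\<dots> \<le> exp (a i) * (real K * \<bar>v i\<bar>)"
        proof -
          have e: "exp (a' i) \<le> exp (a i)" using ale by simp
          have kk: "real k * \<bar>v i\<bar> \<le> real K * \<bar>v i\<bar>" using k by (intro mult_right_mono) auto
          show ?thesis by (rule mult_mono[OF e kk]) auto
        qed
        also have "\<dots> = real K * (exp (a i) * \<bar>v i\<bar>)" by simp
        also have "\<dots> < real K * exp (- R)" using H i Kpos by (intro mult_strict_left_mono) auto
        also have "\<dots> \<le> exp (- R / real m)" by (rule KR)
        finally show ?thesis .
      next
        case 3
        define j where "j = i - m"
        have j: "i = m + j" "j < n" using 3 i unfolding j_def by auto
        have ai: "a' i = a i" unfolding a'_def I_def J_def using j by simp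
        have "\<bar>exp (a' i) * w i\<bar> = real k * (exp (a i) * \<bar>v i\<bar>)"
          using wup[OF j(2)] j ai by (simp add: abs_mult)
        also have "\<dots> \<le> real K * (exp (a i) * \<bar>v i\<bar>)" using k by (intro mult_right_mono) auto
        also have "\<dots> < real K * exp (- R)" using H i Kpos by (intro mult_strict_left_mono) auto
        also have "\<dots> \<le> exp (- R / real m)" by (rule KR)
        finally show ?thesis .
      qed
    qed
    have "delta (m + n) (expact a' (xY m n Y)) < exp (- R / real m)"
      using delta_lessI[of "m + n" w "xY m n Y" a' "exp (- R / real m)"] vecY_mem wne m1 bound
        supnorm_less_iff[of "m + n" "\<lambda>i. exp (a' i) * w i" "exp (- R / real m)"] unfolding w_def by simp
    then show ?thesis using a'C by blast
  qed
qed


lemma arith1: fixes x y R :: real assumes "x > 0" "y > 0"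
  shows "1 / (x * y) * (- (y * R)) = - R / x" using assms by (simp add: field_simps)

lemma arith2: fixes x y R :: real assumes "x > 0" "y > 0"
  shows "(y - 1) / (x * y) * (- (y * R)) = - ((y - 1) * R / x)" using assms by (simp add: field_simps)

lemma arith3: fixes y z R :: real assumes "y > 0"
  shows "z / y * (- (y * R)) = - (z * R)" using assms by (simp add: field_simps)

theorem mainTheorem11:
  fixes m n :: nat and Y :: "nat \<Rightarrow> nat \<Rightarrow> real" and c t :: real
  assumes "m \<ge> 1" and "n \<ge> 1" and "0 < c" and "c < 1" and "t > 0"
  shows "((\<exists>a \<in> Ccone m n (ln (1 / c) / real (m + n)) t.
              delta (m + n) (expact a (xY m n Y)) < c powr (1 / real (m + n)))
          \<longrightarrow> (\<exists>a' \<in> Ccone m n 0 t.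
              delta (m + n) (expact a' (xY m n Y)) < c powr (1 / (real m * real (m + n)))))
       \<and> ((\<exists>a \<in> Ccone m n 0 t.
              delta (m + n) (expact a (xY m n Y)) < c powr ((real (m + n) - 1) / (real m * real (m + n))))
          \<longrightarrow> (\<exists>a' \<in> Ccone m n (ln (1 / c) / real (m + n)) (t - (real n - 1) / real (m + n) * ln c).
              delta (m + n) (expact a' (xY m n Y)) < c powr (1 / real (m + n))))"
proof -
  define R where "R = ln (1 / c) / real (m + n)"
  have mn: "real (m + n) > 0" using assms(1) by simp
  have mr: "real m > 0" using assms(1) by simp
  have mn': "real m + real n > 0" using mn by simp
  have lnc: "ln (1 / c) = - ln c" using assms(3) by (simp add: ln_div)
  have lnneg: "ln c < 0" using assms(3,4) by simp
  have Rpos: "R > 0" unfolding R_def using lnc lnneg mn by (simp add: divide_neg_pos)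
  have LC: "ln c = - (real (m + n) * R)" unfolding R_def using lnc mn by simp
  have e1: "c powr (1 / real (m + n)) = exp (- R)"
  proof -
    have "1 / real (m + n) * ln c = - R" using LC mn by (simp add: field_simps)
    then show ?thesis using assms(3) by (simp add: powr_def)
  qed
  have e2: "c powr (1 / (real m * real (m + n))) = exp (- R / real m)"
  proof -
    have "1 / (real m * real (m + n)) * ln c = - R / real m" unfolding LC by (rule arith1[OF mr mn])
    then show ?thesis using assms(3) by (simp add: powr_def)
  qed
  have e3: "c powr ((real (m + n) - 1) / (real m * real (m + n))) = exp (- ((real (m + n) - 1) * R / real m))"
  proof -
    have "(real (m + n) - 1) / (real m * real (m + n)) * ln c = - ((real (m + n) - 1) * R / real m)"
      unfolding LC by (rule arith2[OF mr mn])
    then show ?thesis using assms(3) by (simp add: powr_def)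
  qed
  have e4: "t - (real n - 1) / real (m + n) * ln c = t + (real n - 1) * R"
    unfolding LC arith3[OF mn] by simp
  show ?thesis
    unfolding e1 e2 e3 e4 R_def[symmetric]
    using partA[OF assms(1,2) Rpos assms(5), of _ Y] partB[OF assms(1,2) Rpos assms(5), of _ Y] by blast
qed

end
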